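(* Consider the algorithm described in the context, and suppose it does not terminate finitely. Then for all $k\in\mathbb{N}$, $$g_k^Ts_k+\frac{\bar\sigma_u\|s_k\|_2^2}{\alpha_k}+r(x_k+s_k)-r_k\le(\kappa_{\nabla f}+\kappa_{\partial r})\|v_k\|_2+\frac{\bar\sigma_u\|v_k\|_2^2}{\alpha_k}.$$
   Context: Problem: $\min_{x\in\mathbb{R}^n} f(x)+r(x)$ subject to $c(x)=0$, where $f:\mathbb{R}^n\to\mathbb{R}$ and $c:\mathbb{R}^n\to\mathbb{R}^m$ ($m\le n$) are continuously differentiable and $r:\mathbb{R}^n\to\mathbb{R}_{\ge 0}$ is convex. Write $g(x)=\nabla f(x)$, $J(x)=\nabla c(x)^T$, and $f_k=f(x_k)$, $g_k=g(x_k)$, $c_k=c(x_k)$, $J_k=J(x_k)$, $r_k=r(x_k)$. All norms are Euclidean. Merit function: $\Phi_\tau(x)=\tau(f(x)+r(x))+\|c(x)\|_2$. Algorithm: inputs $x_0$, $\alpha_0>0$, $\tau_{-1}>0$; constants $\kappa_v>0$, $\sigma_c,\epsilon_\tau,\xi,\eta\in(0,1)$, $\sigma_u\in(0,1/2]$, $\bar\sigma_u:=\sigma_u+\tfrac12$. For $k=0,1,\dots$: 1. If $J_k^Tc_k\ne0$, compute $v_k$ with $v_k\in\mathrm{Range}(J_k^T)$, $\|v_k\|_2\le\kappa_v\alpha_k\|J_k^Tc_k\|_2$, $\|c_k+J_kv_k\|_2\le\|c_k+J_kv_k^c\|_2$, where $v_k^c=-\beta_k^cJ_k^Tc_k$ with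 $\beta_k^c$ minimizing $\tfrac12\|c_k-\beta J_kJ_k^Tc_k\|_2^2$ over $0\le\beta\le\kappa_v\alpha_k$. Otherwise set $v_k=0$, and if $c_k\ne0$ terminate. 2. Let $u_k$ be the unique minimizer of $g_k^Tu+\tfrac1{2\alpha_k}\|u\|_2^2+r(x_k+v_k+u)$ subject to $J_ku=0$; set $s_k=v_k+u_k$. If $s_k=0$, terminate. 3. Let $D_k:=g_k^Ts_k+\bar\sigma_u\|s_k\|_2^2/\alpha_k+r(x_k+s_k)-r_k$; $\tau_{k,\mathrm{trial}}=\infty$ if $D_k\le0$, else $\tau_{k,\mathrm{trial}}=(1-\sigma_c)(\|c_k\|_2-\|c_k+J_kv_k\|_2)/D_k$. Set $\tau_k=\tau_{k-1}$ if $\tau_{k-1}\le\tau_{k,\mathrm{trial}}$, else $\tau_k=\min\{(1-\epsilon_\tau)\tau_{k-1},\tau_{k,\mathrm{trial}}\}$. 4. With $\Delta q_k(s,\tau):=-\tau(g_k^Ts+\tfrac1{2\alpha_k}\|s\|_2^2+r(x_k+s)-r_k)+\|c_k\|_2-\|c_k+J_ks\|_2$: if $\Phi_{\tau_k}(x_k+s_k)\le\Phi_{\tau_k}(x_k)-\eta\Delta q_k(s_k,\tau_k)$ set $x_{k+1}=x_k+s_k$, $\alpha_{k+1}=\alpha_k$; else $x_{k+1}=x_k$, $\alpha_{k+1}=\xi\alpha_k$. Standing assumption: there is an open convex set $\mathcal X$ containing all iterates $x_k$ and trial points $x_k+s_k$ such that $f$ is bounded below on $\mathcal X$, $\|\nabla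 f(x)\|_2\le\kappa_{\nabla f}$ for $x\in\mathcal X$ and $\nabla f$ is Lipschitz on $\mathcal X$, $c$ and $J$ are bounded on $\mathcal X$ and $J$ is Lipschitz on $\mathcal X$, and every subgradient $w\in\partial r(x)$ with $x\in\mathcal X$ satisfies $\|w\|_2\le\kappa_{\partial r}$ (constants $\kappa_{\nabla f},\kappa_{\partial r}>0$). *)

theory Defs
  imports "HOL-Analysis.Analysis"
begin

definition subdiff :: "('a::real_inner \<Rightarrow> real) \<Rightarrow> 'a \<Rightarrow> 'a set" where
  "subdiff r x = {w. \<forall>y. r y \<ge> r x + inner w (y - x)}"

definition merit :: "('n \<Rightarrow> real) \<Rightarrow> ('n \<Rightarrow> real) \<Rightarrow> ('n \<Rightarrow> 'm::real_normed_vector)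
      \<Rightarrow> real \<Rightarrow> 'n \<Rightarrow> real" where
  "merit f r c \<tau> x = \<tau> * (f x + r x) + norm (c x)"

definition model_red :: "(real^'n::finite \<Rightarrow> real) \<Rightarrow> real^'n \<Rightarrow> real^'n \<Rightarrow> real^'m::finite
      \<Rightarrow> real^'n^'m \<Rightarrow> real \<Rightarrow> real^'n \<Rightarrow> real \<Rightarrow> real" where
  "model_red r xk gk ck Jk \<alpha> s \<tau> =
     - \<tau> * (inner gk s + (1 / (2 * \<alpha>)) * (norm s)\<^sup>2 + r (xk + s) - r xk)
     + norm ck - norm (ck + Jk *v s)"

end

theory Submission
  imports Defs
begin


lemma subgrad_exists:
  fixes r :: "'a::euclidean_space \<Rightarrow> real"
  assumes cv: "convex_on UNIV r"
  shows "\<exists>w. \<forall>y. r y \<ge> r p + inner w (y - p)"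
proof -
  define S :: "('a \<times> real) set" where "S = {(p, r p)}"
  define T :: "('a \<times> real) set" where "T = {z. snd z > r (fst z)}"
  have cS: "convex S" unfolding S_def by simp
  have cT: "convex T"
    unfolding convex_def T_def
  proof (intro ballI allI impI, clarsimp)
    fix y1 t1 y2 t2 and u v :: real
    assume h: "r y1 < t1" "r y2 < t2" "0 \<le> u" "0 \<le> v" "u + v = 1"
    have uv: "u = 1 - v" using h by simp
    have "r (u *\<^sub>R y1 + v *\<^sub>R y2) \<le> u * r y1 + v * r y2"
      using convex_onD[OF cv, of v y1 y2] h unfolding uv by simp
    also have "\<dots> < u * t1 + v * t2"
    proof (cases "u = 0")
      case True then show ?thesis using h by simp
    next
      case False
      then have "u * r y1 < u * t1" using h by simp
      moreover have "v * r y2 \<le> v * t2" using h by (simp add: mult_left_mono)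
      ultimately show ?thesis by linarith
    qed
    finally show "r (u *\<^sub>R y1 + v *\<^sub>R y2) < u * t1 + v * t2" .
  qed
  have "S \<noteq> {}" unfolding S_def by simp
  moreover have "(p, r p + 1) \<in> T" unfolding T_def by simp
  then have "T \<noteq> {}" by blast
  moreover have "S \<inter> T = {}" unfolding S_def T_def by auto
  ultimately obtain a b where ab: "a \<noteq> 0" "\<forall>x\<in>S. inner a x \<le> b" "\<forall>x\<in>T. inner a x \<ge> b"
    using separating_hyperplane_sets[OF cS cT] by blast
  obtain a1 a0 where a: "a = (a1, a0)" by (cases a)
  have H: "\<And>y t. t > r y \<Longrightarrow> inner a1 y + a0 * t \<ge> b"
    using ab(3) unfolding T_def a by (auto simp: inner_Pair)
  have Hp: "inner a1 p + a0 * r p \<le> b"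
    using ab(2) unfolding S_def a by (auto simp: inner_Pair)
  have "a0 \<ge> 0"
    using H[of p "r p + 1"] Hp by (simp add: algebra_simps)
  moreover have "a0 \<noteq> 0"
  proof
    assume z: "a0 = 0"
    then have "a1 \<noteq> 0" using ab(1) a by (auto simp: zero_prod_def)
    have "inner a1 (p - a1) \<ge> b" using H[of "p - a1" "r (p - a1) + 1"] z by simp
    then have "inner a1 a1 \<le> 0" using Hp z by (simp add: inner_diff_right)
    then show False using \<open>a1 \<noteq> 0\<close> by (metis inner_gt_zero_iff not_le)
  qed
  ultimately have a0p: "a0 > 0" by simp
  have G: "inner a1 y + a0 * r y \<ge> inner a1 p + a0 * r p" for y
  proof (rule ccontr)
    assume nt: "\<not> inner a1 y + a0 * r y \<ge> inner a1 p + a0 * r p"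
    define d where "d = inner a1 p + a0 * r p - (inner a1 y + a0 * r y)"
    have dp: "d > 0" using nt d_def by simp
    have "inner a1 y + a0 * (r y + d / (2 * a0)) \<ge> b"
      using H[of y "r y + d / (2 * a0)"] dp a0p by simp
    moreover have "a0 * (r y + d / (2 * a0)) = a0 * r y + d / 2" using a0p
      by (simp add: field_simps)
    ultimately show False using Hp d_def dp by linarith
  qed
  show ?thesis
  proof (rule exI[of _ "- (1 / a0) *\<^sub>R a1"], intro allI)
    fix y
    have "a0 * (r p + inner (- (1 / a0) *\<^sub>R a1) (y - p)) = a0 * r p - inner a1 (y - p)"
      using a0p by (simp add: algebra_simps)
    also have "\<dots> \<le> a0 * r y" using G[of y] by (simp add: inner_diff_right)
    finally show "r p + inner (- (1 / a0) *\<^sub>R a1) (y - p) \<le> r y"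
      using a0p by (simp add: mult_le_cancel_left_pos)
  qed
qed

lemma key:
  fixes r :: "real^'n \<Rightarrow> real" and Jk :: "real^'n^'m" and xk gk v u :: "real^'n"
    and X :: "(real^'n) set"
  assumes cv: "convex_on UNIV r" and Xo: "open X" and xX: "xk \<in> X" and sX: "xk + (v + u) \<in> X"
    and \<alpha>: "\<alpha> > 0" and sb: "\<sigma>bar \<le> 1"
    and Ju: "Jk *v u = 0"
    and mn: "\<forall>w. Jk *v w = 0 \<longrightarrow>
           inner gk u + (1 / (2 * \<alpha>)) * (norm u)\<^sup>2 + r (xk + v + u)
           \<le> inner gk w + (1 / (2 * \<alpha>)) * (norm w)\<^sup>2 + r (xk + v + w)"
    and orth: "inner v u = 0" and gb: "norm gk \<le> \<kappa>f"
    and sg: "\<And>y w. y \<in> X \<Longrightarrow> w \<in> subdiff r y \<Longrightarrow> norm w \<le> \<kappa>r"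
  shows "inner gk (v + u) + \<sigma>bar * (norm (v + u))\<^sup>2 / \<alpha> + r (xk + (v + u)) - r xk
         \<le> (\<kappa>f + \<kappa>r) * norm (v) + \<sigma>bar * (norm v)\<^sup>2 / \<alpha>"
proof -
  obtain e where e: "e > 0" "ball (xk + (v + u)) e \<subseteq> X"
    using Xo sX open_contains_ball by blast
  define a where "a = inner gk u"
  define b where "b = (norm u)\<^sup>2 / \<alpha>"
  define r1 where "r1 = r (xk + (v + u))"
  define r0 where "r0 = r xk"
  define K where "K = \<kappa>r * norm v"
  have b0: "b \<ge> 0" unfolding b_def using \<alpha> by simp
  have step: "a + b - t * b / 2 + r1 - r0 \<le> K" if t: "0 < t" "t \<le> 1" "t * norm u < e" for t
  proof -
    define q where "q = xk + (v + u) - t *\<^sub>R u"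
    define q' where "q' = xk + (v + u) - t *\<^sub>R (v + u)"
    have "dist (xk + (v + u)) q = t * norm u" unfolding q_def dist_norm using t by simp
    then have qX: "q \<in> X" using e t by auto
    obtain w where w: "\<forall>y. r y \<ge> r q + inner w (y - q)" using subgrad_exists[OF cv] by blast
    then have "w \<in> subdiff r q" unfolding subdiff_def by auto
    then have nw: "norm w \<le> \<kappa>r" using sg qX by blast
    have "q' - q = - t *\<^sub>R v" unfolding q_def q'_def by (simp add: algebra_simps)
    then have "r q' \<ge> r q - t * inner w v" using w[rule_format, of q'] by simp
    moreover have "inner w v \<le> norm w * norm v" by (rule norm_cauchy_schwarz)
    then have "t * inner w v \<le> t * (\<kappa>r * norm v)"
      using nw t by (meson mult_left_mono mult_right_mono norm_ge_zero order_trans less_imp_le)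
    ultimately have rq: "r q \<le> r q' + t * K" unfolding K_def by linarith
    have qe: "q' = (1 - t) *\<^sub>R (xk + (v + u)) + t *\<^sub>R xk" unfolding q'_def by (simp add: algebra_simps)
    have rq': "r q' \<le> (1 - t) * r1 + t * r0"
      using convex_onD[OF cv, of t "xk + (v + u)" xk] t unfolding r1_def r0_def qe by simp
    have "Jk *v ((1 - t) *\<^sub>R u) = 0" using Ju by (simp add: matrix_vector_mult_scaleR)
    then have m: "a + (1 / (2 * \<alpha>)) * (norm u)\<^sup>2 + r1
        \<le> (1 - t) * a + (1 / (2 * \<alpha>)) * ((1 - t)\<^sup>2 * (norm u)\<^sup>2) + r q"
    proof -
      have e1: "norm ((1 - t) *\<^sub>R u) = (1 - t) * norm u" using t by simp
      have e2: "xk + v + (1 - t) *\<^sub>R u = q" unfolding q_def by (simp add: algebra_simps)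
      have e3: "inner gk ((1 - t) *\<^sub>R u) = (1 - t) * a" unfolding a_def by simp
      have e4: "xk + v + u = xk + (v + u)" by simp
      show ?thesis
        using mn[rule_format, OF \<open>Jk *v ((1 - t) *\<^sub>R u) = 0\<close>] unfolding e1 e2 e3 e4
        unfolding a_def r1_def by (simp add: power_mult_distrib)
    qed
    have "(1 / (2 * \<alpha>)) * (norm u)\<^sup>2 = b / 2" unfolding b_def by simp
    moreover have "(1 / (2 * \<alpha>)) * ((1 - t)\<^sup>2 * (norm u)\<^sup>2) = (1 - t)\<^sup>2 * (b / 2)"
      unfolding b_def by simp
    ultimately have "a + b / 2 + r1 \<le> (1 - t) * a + (1 - t)\<^sup>2 * (b / 2) + (1 - t) * r1 + t * r0 + t * K"
      using m rq rq' by linarith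
    then have "t * (a + b - t * b / 2 + r1 - r0) \<le> t * K"
      by (simp add: algebra_simps power2_eq_square add_divide_distrib)
    then show ?thesis using t by simp
  qed
  have main: "a + b + r1 - r0 \<le> K"
  proof (rule ccontr)
    assume nt: "\<not> a + b + r1 - r0 \<le> K"
    define d where "d = a + b + r1 - r0 - K"
    have dp: "d > 0" using nt d_def by simp
    define t where "t = min 1 (min (e / (2 * (norm u + 1))) (d / (b + 1)))"
    have P: "2 * (norm u + 1) > 0" by (smt (verit) norm_ge_zero)
    then have "e / (2 * (norm u + 1)) > 0" using e by (smt (verit) divide_pos_pos)
    moreover have "d / (b + 1) > 0" using dp b0 by simp
    ultimately have t0: "t > 0" unfolding t_def by simp
    have t1: "t \<le> 1" unfolding t_def by simp
    have "t \<le> e / (2 * (norm u + 1))" unfolding t_def by simp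
    then have "t * (2 * (norm u + 1)) \<le> e"
      using pos_le_divide_eq[OF P] by blast
    moreover have "t * (2 * (norm u + 1)) = 2 * (t * norm u) + 2 * t" by (simp add: algebra_simps)
    moreover have "t * norm u \<ge> 0" using t0 by simp
    ultimately have t2: "t * norm u < e" using t0 by linarith
    have "t \<le> d / (b + 1)" unfolding t_def by simp
    then have "t * (b + 1) \<le> d" using b0 by (simp add: pos_le_divide_eq)
    then have "t * b < 2 * d" using t0 dp by (simp add: algebra_simps)
    then show False using step[OF t0 t1 t2] d_def by simp
  qed
  have ns: "(norm (v + u))\<^sup>2 = (norm v)\<^sup>2 + (norm u)\<^sup>2"
    using orth by (simp add: power2_norm_eq_inner inner_add_left inner_add_right inner_commute)
  have gv: "inner gk v \<le> \<kappa>f * norm v"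
    using norm_cauchy_schwarz[of gk v] gb by (meson mult_right_mono norm_ge_zero order_trans)
  have "\<sigma>bar * (norm (v + u))\<^sup>2 / \<alpha> = \<sigma>bar * (norm v)\<^sup>2 / \<alpha> + \<sigma>bar * b"
    unfolding ns b_def by (simp add: algebra_simps add_divide_distrib)
  moreover have "\<sigma>bar * b \<le> b" using mult_right_mono[OF sb b0] by simp
  ultimately show ?thesis using main gv unfolding a_def r1_def r0_def K_def
    by (simp add: inner_add_right algebra_simps)
qed

theorem lemma3p7:
  fixes f :: "real^'n \<Rightarrow> real" and r :: "real^'n \<Rightarrow> real"
    and c :: "real^'n \<Rightarrow> real^'m" and g :: "real^'n \<Rightarrow> real^'n"
    and J :: "real^'n \<Rightarrow> real^'n^'m"
    and x v u s :: "nat \<Rightarrow> real^'n" and \<alpha> \<tau> :: "nat \<Rightarrow> real"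
    and \<tau>m1 \<kappa>v \<sigma>c \<epsilon>\<tau> \<xi> \<eta> \<sigma>u \<kappa>f \<kappa>r :: real
    and X :: "(real^'n) set"
  defines "\<sigma>bar \<equiv> \<sigma>u + 1/2"
  assumes mn: "CARD('m) \<le> CARD('n)"
    \<comment> \<open>problem data\<close>
    and f_deriv: "\<And>y. (f has_derivative (\<lambda>h. inner (g y) h)) (at y)"
    and g_cont: "continuous_on UNIV g"
    and c_deriv: "\<And>y. (c has_derivative (\<lambda>h. J y *v h)) (at y)"
    and J_cont: "continuous_on UNIV J"
    and r_convex: "convex_on UNIV r"
    and r_nonneg: "\<And>y. r y \<ge> 0"
    \<comment> \<open>constants\<close>
    and \<kappa>v_pos: "\<kappa>v > 0"
    and \<sigma>c: "0 < \<sigma>c" "\<sigma>c < 1" and \<epsilon>\<tau>: "0 < \<epsilon>\<tau>" "\<epsilon>\<tau> < 1"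
    and \<xi>: "0 < \<xi>" "\<xi> < 1" and \<eta>: "0 < \<eta>" "\<eta> < 1"
    and \<sigma>u: "0 < \<sigma>u" "\<sigma>u \<le> 1/2"
    and \<alpha>0: "\<alpha> 0 > 0" and \<tau>m1: "\<tau>m1 > 0"
    \<comment> \<open>step 1 (with nontermination: if J_k^T c_k = 0 then c_k = 0)\<close>
    and step1: "\<And>k. transpose (J (x k)) *v c (x k) \<noteq> 0 \<Longrightarrow>
        (\<exists>y. v k = transpose (J (x k)) *v y)
        \<and> norm (v k) \<le> \<kappa>v * \<alpha> k * norm (transpose (J (x k)) *v c (x k))
        \<and> (\<exists>\<beta>c. 0 \<le> \<beta>c \<and> \<beta>c \<le> \<kappa>v * \<alpha> k
              \<and> (\<forall>\<beta>. 0 \<le> \<beta> \<and> \<beta> \<le> \<kappa>v * \<alpha> k \<longrightarrow>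
                   (1/2) * (norm (c (x k) - \<beta> *\<^sub>R (J (x k) *v (transpose (J (x k)) *v c (x k)))))\<^sup>2
                   \<ge> (1/2) * (norm (c (x k) - \<beta>c *\<^sub>R (J (x k) *v (transpose (J (x k)) *v c (x k)))))\<^sup>2)
              \<and> norm (c (x k) + J (x k) *v v k)
                  \<le> norm (c (x k) + J (x k) *v (- \<beta>c *\<^sub>R (transpose (J (x k)) *v c (x k)))))"
    and step1_zero: "\<And>k. transpose (J (x k)) *v c (x k) = 0 \<Longrightarrow> v k = 0 \<and> c (x k) = 0"
    \<comment> \<open>step 2 (with nontermination: s_k \<noteq> 0)\<close>
    and step2: "\<And>k. J (x k) *v u k = 0 \<and>
        (\<forall>w. J (x k) *v w = 0 \<longrightarrow>
           inner (g (x k)) (u k) + (1 / (2 * \<alpha> k)) * (norm (u k))\<^sup>2 + r (x k + v k + u k)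
           \<le> inner (g (x k)) w + (1 / (2 * \<alpha> k)) * (norm w)\<^sup>2 + r (x k + v k + w))"
    and s_def: "\<And>k. s k = v k + u k"
    and s_nz: "\<And>k. s k \<noteq> 0"
    \<comment> \<open>step 3: merit parameter update; tau k is tau_k, tau_{-1} = \<tau>m1\<close>
    and step3: "\<And>k. let D = inner (g (x k)) (s k) + \<sigma>bar * (norm (s k))\<^sup>2 / \<alpha> k
                            + r (x k + s k) - r (x k);
                     tprev = (if k = 0 then \<tau>m1 else \<tau> (k - 1));
                     trial = (1 - \<sigma>c) * (norm (c (x k)) - norm (c (x k) + J (x k) *v v k)) / D
                 in \<tau> k = (if D \<le> 0 \<or> tprev \<le> trial then tprev
                           else min ((1 - \<epsilon>\<tau>) * tprev) trial)"
    \<comment> \<open>step 4: acceptance test\<close>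
    and step4: "\<And>k. if merit f r c (\<tau> k) (x k + s k)
                         \<le> merit f r c (\<tau> k) (x k)
                            - \<eta> * model_red r (x k) (g (x k)) (c (x k)) (J (x k)) (\<alpha> k) (s k) (\<tau> k)
                   then x (Suc k) = x k + s k \<and> \<alpha> (Suc k) = \<alpha> k
                   else x (Suc k) = x k \<and> \<alpha> (Suc k) = \<xi> * \<alpha> k"
    \<comment> \<open>standing assumption\<close>
    and X_open: "open X" and X_convex: "convex X"
    and X_iter: "\<And>k. x k \<in> X" and X_trial: "\<And>k. x k + s k \<in> X"
    and f_bdd: "bdd_below (f ` X)"
    and \<kappa>f_pos: "\<kappa>f > 0" and g_bdd: "\<And>y. y \<in> X \<Longrightarrow> norm (g y) \<le> \<kappa>f"
    and g_lip: "\<exists>L. L-lipschitz_on X g"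
    and c_bdd: "bounded (c ` X)" and J_bdd: "bounded (J ` X)"
    and J_lip: "\<exists>L. L-lipschitz_on X J"
    and \<kappa>r_pos: "\<kappa>r > 0"
    and subgrad_bdd: "\<And>y w. y \<in> X \<Longrightarrow> w \<in> subdiff r y \<Longrightarrow> norm w \<le> \<kappa>r"
  shows "\<forall>k. inner (g (x k)) (s k) + \<sigma>bar * (norm (s k))\<^sup>2 / \<alpha> k + r (x k + s k) - r (x k)
             \<le> (\<kappa>f + \<kappa>r) * norm (v k) + \<sigma>bar * (norm (v k))\<^sup>2 / \<alpha> k"
  proof
  fix k
  have apos: "\<alpha> k > 0" for k
  proof (induction k)
    case 0 show ?case using \<alpha>0 .
  next
    case (Suc k) then show ?case using step4[of k] \<xi> by (auto split: if_splits)
  qed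
  have orth: "inner (v k) (u k) = 0"
  proof (cases "transpose (J (x k)) *v c (x k) = 0")
    case True then show ?thesis using step1_zero by simp
  next
    case False
    then obtain y where y: "v k = transpose (J (x k)) *v y" using step1 by blast
    have "transpose (J (x k)) *v y = y v* J (x k)"
      using vector_transpose_matrix[of y "transpose (J (x k))"] by simp
    then show ?thesis using y step2[of k] by (simp add: dot_lmul_matrix)
  qed
  have sb: "\<sigma>bar \<le> 1" unfolding \<sigma>bar_def using \<sigma>u by simp
  have "x k + (v k + u k) \<in> X" using X_trial[of k] s_def by simp
  from key[OF r_convex X_open X_iter this apos sb conjunct1[OF step2[of k]] conjunct2[OF step2[of k]]
      orth g_bdd[OF X_iter] subgrad_bdd]
  show "inner (g (x k)) (s k) + \<sigma>bar * (norm (s k))\<^sup>2 / \<alpha> k + r (x k + s k) - r (x k)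
             \<le> (\<kappa>f + \<kappa>r) * norm (v k) + \<sigma>bar * (norm (v k))\<^sup>2 / \<alpha> k"
    using s_def by simp
qed

end
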